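(* Let $\Bbbk$ be a field, $n\ge 2$ an integer, $q\in\Bbbk$ a primitive $n$-th root of unity, $T_n(q)$ the Taft algebra and $A$ a unital associative $\Bbbk$-algebra. Let $\cdot:T_n(q)\otimes A\to A$ be a linear map, written $h\otimes a\mapsto h\cdot a$, and suppose $g\cdot 1_A\in\{0,1_A\}$. Then $\cdot$ is a partial action of $T_n(q)$ on $A$ if and only if either $\cdot$ is a global action, or the restriction of $\cdot$ to $\Bbbk C_n\otimes A$ (where $\Bbbk C_n=\mathrm{span}\{1,g,\dots,g^{n-1}\}$) is a partial action of the group algebra $\Bbbk C_n$ on $A$ with $g\cdot 1_A=0$ and, for all $0\le i,j<n$ and $a\in A$: (i) $g^ix^j\cdot a=q^{-ij}\sum_{k=0}^{j}(-1)^k q^{-\frac{k(k-1)}{2}}\binom{j}{k}_{q^{-1}}(x\cdot 1_A)^{j-k}(g^{i+k}\cdot a)(x\cdot 1_A)^k$; (ii) $(x\cdot 1_A)^n\in Z(A)$; (iii) $g^i\cdot(x\cdot 1_A)=q^{-i}(g^i\cdot 1_A)(x\cdot 1_A)$.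
   Context: The Taft algebra $T_n(q)$ is the Hopf algebra generated by $g,x$ with relations $g^n=1$, $x^n=0$, $xg=qgx$; it has basis $\{g^ix^j:0\le i,j<n\}$, with $\Delta(g)=g\otimes g$, $\Delta(x)=x\otimes 1+g\otimes x$, $\varepsilon(g)=1$, $\varepsilon(x)=0$, $S(g)=g^{n-1}$, $S(x)=-g^{n-1}x$; exponents of $g$ are read modulo $n$. $Z(A)$ is the center of $A$. For a bialgebra $H$ with $\Delta(h)=h_1\otimes h_2$, a partial action of $H$ on $A$ is a linear map $\cdot:H\otimes A\to A$ with (PA.1) $1_H\cdot a=a$, (PA.2) $h\cdot(ab)=(h_1\cdot a)(h_2\cdot b)$, (PA.3) $h\cdot(k\cdot a)=(h_1\cdot 1_A)(h_2k\cdot a)$ for all $h,k\in H$, $a,b\in A$. A global action is a partial action which additionally satisfies $h\cdot 1_A=\varepsilon(h)1_A$ for all $h$ (i.e. $A$ is an $H$-module algebra). $q$-binomial coefficients: for an invertible scalar $p$ and integers $N\ge0$, $m$: $\binom{0}{0}_p=1$, $\binom{N}{m}_p=0$ if $m>N$ or $m<0$, and for $N\ge1$, $0\le m\le N$, $\binom{N}{m}_p=\binom{N-1}{m-1}_p+p^m\binom{N-1}{m}_p$. *)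

theory Defs
  imports Main "HOL.Modules"
begin

fun qbinom :: "'k::field \<Rightarrow> nat \<Rightarrow> nat \<Rightarrow> 'k" where
  "qbinom p 0 m = (if m = 0 then 1 else 0)"
| "qbinom p (Suc N) m =
     (if m > Suc N then 0
      else (if m = 0 then 0 else qbinom p N (m - 1)) + p ^ m * qbinom p N m)"

definition primitive_root :: "nat \<Rightarrow> 'k::field \<Rightarrow> bool" where
  "primitive_root n q \<longleftrightarrow> q ^ n = 1 \<and> (\<forall>m. 0 < m \<and> m < n \<longrightarrow> q ^ m \<noteq> 1)"

definition algebra_over :: "('k::field \<Rightarrow> 'a::ring_1 \<Rightarrow> 'a) \<Rightarrow> bool" where
  "algebra_over sc \<longleftrightarrow> module sc \<and>
     (\<forall>c a b. sc c (a * b) = sc c a * b \<and> sc c (a * b) = a * sc c b)"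

(* A linear map T_n(q) \<otimes> A \<rightarrow> A is given by its values on the basis g^i x^j:
   act i j a = (g^i x^j) \<cdot> a, each act i j being 'k-linear (i, j < n). *)
definition taft_linear_map ::
  "('k::field \<Rightarrow> 'a::ring_1 \<Rightarrow> 'a) \<Rightarrow> nat \<Rightarrow> (nat \<Rightarrow> nat \<Rightarrow> 'a \<Rightarrow> 'a) \<Rightarrow> bool" where
  "taft_linear_map sc n act \<longleftrightarrow> (\<forall>i<n. \<forall>j<n. module_hom sc sc (act i j))"

(* Delta(g^i x^j) = sum_m [j choose m]_q g^(i+m) x^(j-m) \<otimes> g^i x^m,
   (g^i x^m)(g^r x^s) = q^(m r) g^(i+r) x^(m+s)  (= 0 if m+s \<ge> n). *)
definition taft_partial_action ::
  "('k::field \<Rightarrow> 'a::ring_1 \<Rightarrow> 'a) \<Rightarrow> nat \<Rightarrow> 'k \<Rightarrow> (nat \<Rightarrow> nat \<Rightarrow> 'a \<Rightarrow> 'a) \<Rightarrow> bool" where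
  "taft_partial_action sc n q act \<longleftrightarrow>
     (\<forall>a. act 0 0 a = a) \<and>
     (\<forall>i<n. \<forall>j<n. \<forall>a b. act i j (a * b) =
        (\<Sum>m\<le>j. sc (qbinom q j m) (act ((i + m) mod n) (j - m) a * act i m b))) \<and>
     (\<forall>i<n. \<forall>j<n. \<forall>r<n. \<forall>s<n. \<forall>a. act i j (act r s a) =
        (\<Sum>m\<le>j. sc (qbinom q j m)
            (act ((i + m) mod n) (j - m) 1 *
             (if m + s < n then sc (q ^ (m * r)) (act ((i + r) mod n) (m + s) a) else 0))))"

(* Global action: partial action with h \<cdot> 1 = \<epsilon>(h) 1 *)
definition taft_global_action ::
  "('k::field \<Rightarrow> 'a::ring_1 \<Rightarrow> 'a) \<Rightarrow> nat \<Rightarrow> 'k \<Rightarrow> (nat \<Rightarrow> nat \<Rightarrow> 'a \<Rightarrow> 'a) \<Rightarrow> bool" where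
  "taft_global_action sc n q act \<longleftrightarrow> taft_partial_action sc n q act \<and>
     (\<forall>i<n. \<forall>j<n. act i j 1 = (if j = 0 then 1 else 0))"

(* Partial action of the group algebra k C_n (basis g^i, Delta(g) = g \<otimes> g),
   given by gact i a = g^i \<cdot> a *)
definition group_partial_action :: "nat \<Rightarrow> (nat \<Rightarrow> 'a::ring_1 \<Rightarrow> 'a) \<Rightarrow> bool" where
  "group_partial_action n gact \<longleftrightarrow>
     (\<forall>a. gact 0 a = a) \<and>
     (\<forall>i<n. \<forall>a b. gact i (a * b) = gact i a * gact i b) \<and>
     (\<forall>i<n. \<forall>r<n. \<forall>a. gact i (gact r a) = gact i 1 * gact ((i + r) mod n) a)"

end

theory Submission
  imports Defs
begin


lemma qb_zero: "N < m \<Longrightarrow> qbinom p N m = 0"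
  by (induction N arbitrary: m) auto

lemma qb_0[simp]: "qbinom p N 0 = 1"
  by (induction N) auto

lemma qb_Suc: "qbinom p (Suc N) m = (if m = 0 then 0 else qbinom p N (m - 1)) + p ^ m * qbinom p N m"
  by (auto simp: qb_zero)

lemma qb_diag[simp]: "qbinom p N N = 1"
  by (induction N) (auto simp: qb_zero)

declare qbinom.simps(2)[simp del]

lemma qb_Suc2: "qbinom p (Suc N) m = qbinom p N m + (if m = 0 then 0 else p ^ (Suc N - m) * qbinom p N (m - 1))"
proof (induction N arbitrary: m)
  case 0
  then show ?case by (cases m) (auto simp: qb_zero)
next
  case (Suc N)
  show ?case
  proof (cases m)
    case 0
    then show ?thesis by simp
  next
    case (Suc k)
    have A: "qbinom p (Suc (Suc N)) (Suc k) = qbinom p (Suc N) k + p ^ Suc k * qbinom p (Suc N) (Suc k)"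
      using qb_Suc[of p "Suc N" "Suc k"] by simp
    have B1: "qbinom p (Suc N) k = qbinom p N k + (if k = 0 then 0 else p ^ (Suc N - k) * qbinom p N (k - 1))"
      using Suc.IH by blast
    have B2: "qbinom p (Suc N) (Suc k) = qbinom p N (Suc k) + p ^ (N - k) * qbinom p N k"
      using Suc.IH[of "Suc k"] by simp
    have C1: "qbinom p (Suc N) k = (if k = 0 then 0 else qbinom p N (k - 1)) + p ^ k * qbinom p N k"
      using qb_Suc by blast
    have C2: "qbinom p (Suc N) (Suc k) = qbinom p N k + p ^ Suc k * qbinom p N (Suc k)"
      using qb_Suc[of p N "Suc k"] by simp
    have D: "p ^ Suc k * (p ^ (N - k) * qbinom p N k) = p ^ (Suc N - k) * (p ^ k * qbinom p N k)"
    proof (cases "k \<le> N")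
      case True
      then have "Suc k + (N - k) = (Suc N - k) + k" by simp
      then have "p ^ Suc k * p ^ (N - k) = p ^ (Suc N - k) * p ^ k"
        by (metis power_add)
      then show ?thesis by (simp add: mult.assoc[symmetric])
    next
      case False
      then show ?thesis by (simp add: qb_zero)
    qed
    have "qbinom p (Suc (Suc N)) (Suc k) = qbinom p N k + (if k = 0 then 0 else p ^ (Suc N - k) * qbinom p N (k - 1))
       + p ^ Suc k * qbinom p N (Suc k) + p ^ Suc k * (p ^ (N - k) * qbinom p N k)"
      using A B1 B2 by (simp add: algebra_simps)
    also have "\<dots> = qbinom p (Suc N) (Suc k) + p ^ (Suc N - k) * qbinom p (Suc N) k"
      using C1 C2 D by (simp add: algebra_simps; blast)
    finally show ?thesis using Suc by simp
  qed
qed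

lemma qb_vanish:
  fixes p :: "'k::field"
  assumes pn: "p ^ n = 1" and prim: "\<forall>m. 0 < m \<and> m < n \<longrightarrow> p ^ m \<noteq> 1"
  shows "0 < k \<Longrightarrow> k < n \<Longrightarrow> qbinom p n k = 0"
proof (induction k)
  case 0
  then show ?case by simp
next
  case (Suc k)
  have rel: "(1 - p ^ (Suc n - Suc k)) * qbinom p n k = (1 - p ^ Suc k) * qbinom p n (Suc k)"
    using qb_Suc[of p n "Suc k"] qb_Suc2[of p n "Suc k"] by (simp add: algebra_simps)
  have "(1 - p ^ (Suc n - Suc k)) * qbinom p n k = 0"
  proof (cases k)
    case 0
    then show ?thesis using pn by simp
  next
    case (Suc k')
    then show ?thesis using Suc.IH Suc.prems by simp
  qed
  then have "(1 - p ^ Suc k) * qbinom p n (Suc k) = 0" by (metis rel)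
  moreover have "1 - p ^ Suc k \<noteq> 0" using prim Suc.prems by auto
  ultimately show ?case by (metis mult_eq_0_iff)
qed

lemma sign_lemma:
  fixes p :: "'k::field"
  assumes pn: "p ^ n = 1" and prim: "\<forall>m. 0 < m \<and> m < n \<longrightarrow> p ^ m \<noteq> 1" and n2: "n \<ge> 2"
  shows "(-1) ^ n * p ^ (n * (n - 1) div 2) = -1"
proof (cases "even n")
  case True
  then obtain h where h: "n = 2 * h" by auto
  have hpos: "0 < h" "h < n" using h n2 by auto
  have "(p ^ h) ^ 2 = 1" using pn h by (simp add: power_mult[symmetric] mult.commute)
  then have "(p ^ h - 1) * (p ^ h + 1) = 0" by (simp add: algebra_simps power2_eq_square)
  moreover have "p ^ h \<noteq> 1" using prim hpos by auto
  ultimately have ph: "p ^ h = -1" by (simp add: eq_neg_iff_add_eq_0)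
  have e: "n * (n - 1) div 2 = h * (n - 1)" using h by simp
  have "odd (n - 1)" using True n2 by simp
  then have "p ^ (n * (n - 1) div 2) = -1" using e ph by (simp add: power_mult)
  then show ?thesis using True by simp
next
  case False
  then have "even (n - 1)" using n2 by simp
  then obtain h where h: "n - 1 = 2 * h" by (meson evenE)
  have e: "n * (n - 1) div 2 = n * h" using h by simp
  have "p ^ (n * (n - 1) div 2) = 1" using e pn by (simp add: power_mult)
  then show ?thesis using False by simp
qed



definition cc :: "'k::field \<Rightarrow> nat \<Rightarrow> nat \<Rightarrow> 'k" where
  "cc p t k = (-1) ^ k * p ^ (k * (k - 1) div 2) * qbinom p t k"

lemma tri_Suc: "Suc j * j div 2 = j * (j - 1) div 2 + j"
proof (cases j)
  case 0 then show ?thesis by simp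
next
  case (Suc m)
  have "Suc j * j = j * (j - 1) + 2 * j" using Suc by (simp add: algebra_simps)
  then show ?thesis by simp
qed

lemma cc_Suc: "cc p (Suc t) k = cc p t k - (if k = 0 then 0 else p ^ t * cc p t (k - 1))"
proof (cases k)
  case 0 then show ?thesis by (simp add: cc_def qb_Suc2)
next
  case (Suc j)
  have B: "qbinom p (Suc t) (Suc j) = qbinom p t (Suc j) + p ^ (t - j) * qbinom p t j"
    using qb_Suc2[of p t "Suc j"] by simp
  have E: "p ^ (Suc j * j div 2) * (p ^ (t - j) * qbinom p t j) = p ^ t * (p ^ (j * (j - 1) div 2) * qbinom p t j)"
  proof (cases "j \<le> t")
    case True
    have h: "Suc j * j div 2 + (t - j) = t + j * (j - 1) div 2" using True tri_Suc[of j] by simp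
    have "p ^ (Suc j * j div 2) * p ^ (t - j) = p ^ (Suc j * j div 2 + (t - j))" by (rule power_add[symmetric])
    also have "\<dots> = p ^ (t + j * (j - 1) div 2)" by (simp only: h)
    also have "\<dots> = p ^ t * p ^ (j * (j - 1) div 2)" by (rule power_add)
    finally have "p ^ (Suc j * j div 2) * p ^ (t - j) = p ^ t * p ^ (j * (j - 1) div 2)" .
    then show ?thesis by (simp only: mult.assoc[symmetric])
  next
    case False then show ?thesis by (simp add: qb_zero)
  qed
  show ?thesis using Suc B E by (simp add: cc_def algebra_simps; force)
qed

lemma cc_0[simp]: "cc p t 0 = 1" by (simp add: cc_def)
lemma cc_zero: "t < k \<Longrightarrow> cc p t k = 0" by (simp add: cc_def qb_zero)

locale taft =
  fixes sc :: "'k::field \<Rightarrow> 'a::ring_1 \<Rightarrow> 'a" and n :: nat and q :: 'k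
    and act :: "nat \<Rightarrow> nat \<Rightarrow> 'a \<Rightarrow> 'a"
  assumes alg: "algebra_over sc" and n2: "2 \<le> n" and prim: "primitive_root n q"
    and lin: "taft_linear_map sc n act"
begin

sublocale M: module sc using alg by (simp add: algebra_over_def)

lemma scl[simp]: "sc c a * b = sc c (a * b)" using alg by (simp add: algebra_over_def)
lemma scr[simp]: "a * sc c b = sc c (a * b)" using alg by (simp add: algebra_over_def)

lemma act_hom: "i < n \<Longrightarrow> j < n \<Longrightarrow> module_hom sc sc (act i j)"
  using lin by (simp add: taft_linear_map_def)

lemma act_add: "i < n \<Longrightarrow> j < n \<Longrightarrow> act i j (a + b) = act i j a + act i j b"
  using act_hom module_hom.add by blast
lemma act_sc: "i < n \<Longrightarrow> j < n \<Longrightarrow> act i j (sc c a) = sc c (act i j a)"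
  using act_hom module_hom.scale by blast
lemma act_zero: "i < n \<Longrightarrow> j < n \<Longrightarrow> act i j 0 = 0"
  using act_hom module_hom.zero by blast
lemma act_diff: "i < n \<Longrightarrow> j < n \<Longrightarrow> act i j (a - b) = act i j a - act i j b"
  using act_hom module_hom.diff by blast
lemma act_neg: "i < n \<Longrightarrow> j < n \<Longrightarrow> act i j (- a) = - act i j a"
  using act_hom module_hom.neg by blast

definition p where "p = inverse q"
definition y where "y = act 0 1 1"
definition G where "G i a = act (i mod n) 0 a"
definition S where "S i t a = (\<Sum>k\<le>t. sc (cc p t k) (y ^ (t - k) * G (i + k) a * y ^ k))"
definition F where "F i t a = sc (p ^ (i * t)) (S i t a)"

lemma n_pos: "0 < n" using n2 by simp
lemma qn: "q ^ n = 1" using prim by (simp add: primitive_root_def)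
lemma q_nz: "q \<noteq> 0" using qn n_pos by (metis power_0_left zero_neq_one less_not_refl2)
lemma p_nz: "p \<noteq> 0" using q_nz by (simp add: p_def)
lemma pq: "p * q = 1" using q_nz by (simp add: p_def)
lemma qp: "q * p = 1" using q_nz by (simp add: p_def)
lemma pn: "p ^ n = 1" using qn by (simp add: p_def power_inverse)
lemma p_prim: "\<forall>m. 0 < m \<and> m < n \<longrightarrow> p ^ m \<noteq> 1"
  using prim by (simp add: p_def primitive_root_def power_inverse)

lemma pow_mod_gen: "(c::'k) ^ n = 1 \<Longrightarrow> c ^ (k mod n) = c ^ k"
proof -
  assume "c ^ n = 1"
  have "c ^ k = c ^ (n * (k div n) + k mod n)" by (simp only: mult_div_mod_eq)
  also have "\<dots> = c ^ (k mod n)" using \<open>c ^ n = 1\<close> by (simp only: power_add power_mult power_one mult_1_left)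
  finally show ?thesis by simp
qed
lemma p_mod: "p ^ (k mod n) = p ^ k" using pow_mod_gen pn by blast
lemma q_mod: "q ^ (k mod n) = q ^ k" using pow_mod_gen qn by blast

lemma pq_pow: "p ^ k * q ^ k = 1" by (metis pq power_mult_distrib power_one)
lemma qp_pow: "q ^ k * p ^ k = 1" by (metis qp power_mult_distrib power_one)

lemma G_mod: "G (i mod n) a = G i a" by (simp add: G_def)
lemma G_modk: "G (i mod n + k) a = G (i + k) a" by (simp add: G_def mod_add_left_eq)
lemma S_mod: "S (i mod n) t a = S i t a" by (simp add: S_def G_modk)

lemma S_rec: "S i (Suc t) a = y * S i t a - sc (p ^ t) (S (Suc i) t a * y)"
proof -
  define T where "T k = y ^ (Suc t - k) * G (i + k) a * y ^ k" for k
  have "S i (Suc t) a = (\<Sum>k\<le>Suc t. sc (cc p (Suc t) k) (T k))" by (simp add: S_def T_def)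
  also have "\<dots> = (\<Sum>k\<le>Suc t. sc (cc p t k) (T k)) - (\<Sum>k\<le>Suc t. sc (if k = 0 then 0 else p ^ t * cc p t (k - 1)) (T k))"
    by (simp add: cc_Suc M.scale_left_diff_distrib sum_subtractf)
  also have "(\<Sum>k\<le>Suc t. sc (cc p t k) (T k)) = y * S i t a"
  proof -
    have "(\<Sum>k\<le>Suc t. sc (cc p t k) (T k)) = (\<Sum>k\<le>t. sc (cc p t k) (T k))"
      by (simp add: cc_zero)
    also have "\<dots> = (\<Sum>k\<le>t. y * sc (cc p t k) (y ^ (t - k) * G (i + k) a * y ^ k))"
    proof (rule sum.cong)
      fix k assume "k \<in> {..t}"
      then have "Suc t - k = Suc (t - k)" by (simp add: Suc_diff_le)
      then show "sc (cc p t k) (T k) = y * sc (cc p t k) (y ^ (t - k) * G (i + k) a * y ^ k)"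
        by (simp add: T_def mult.assoc)
    qed simp
    also have "\<dots> = y * S i t a" by (simp add: S_def sum_distrib_left)
    finally show ?thesis .
  qed
  also have "(\<Sum>k\<le>Suc t. sc (if k = 0 then 0 else p ^ t * cc p t (k - 1)) (T k)) = sc (p ^ t) (S (Suc i) t a * y)"
  proof -
    have "(\<Sum>k\<le>Suc t. sc (if k = 0 then 0 else p ^ t * cc p t (k - 1)) (T k))
        = (\<Sum>k\<le>t. sc (p ^ t * cc p t k) (T (Suc k)))"
      by (simp only: sum.atMost_Suc_shift) simp
    also have "\<dots> = (\<Sum>k\<le>t. sc (p ^ t) (sc (cc p t k) (y ^ (t - k) * G (Suc i + k) a * y ^ k) * y))"
      by (simp add: T_def mult.assoc power_commutes)
    also have "\<dots> = sc (p ^ t) (S (Suc i) t a * y)"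
      by (simp add: S_def sum_distrib_right M.scale_sum_right)
    finally show ?thesis .
  qed
  finally show ?thesis .
qed

lemma F_mod: "F (i mod n) t a = F i t a"
proof -
  have "p ^ (i mod n * t) = p ^ (i * t)"
    by (metis p_mod power_mult mult.commute)
  then show ?thesis by (simp add: F_def S_mod)
qed

lemma F_rec: "F i (Suc t) a = sc (p ^ i) (y * F i t a - F (Suc i) t a * y)"
proof -
  have e1: "p ^ (i + i * t) = p ^ i * p ^ (i * t)" by (simp add: power_add)
  have e2: "p ^ (t + i * t) = p ^ (i * t) * p ^ t" by (simp add: power_add mult.commute)
  have "sc (p ^ i) (y * F i t a - F (Suc i) t a * y)
     = sc (p ^ i) (sc (p ^ (i * t)) (y * S i t a) - sc (p ^ (i * t) * p ^ t) (S (Suc i) t a * y))"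
    by (simp add: F_def e2)
  also have "\<dots> = sc (p ^ i * p ^ (i * t)) (y * S i t a) - sc (p ^ i * p ^ (i * t)) (sc (p ^ t) (S (Suc i) t a * y))"
    by (simp add: M.scale_right_diff_distrib mult.assoc)
  also have "\<dots> = F i (Suc t) a"
    by (simp add: F_def S_rec e1 M.scale_right_diff_distrib)
  finally show ?thesis by simp
qed

end


context taft begin

lemma F0: "i < n \<Longrightarrow> F i 0 a = act i 0 a"
  by (simp add: F_def S_def G_def)

lemma sum_ends:
  fixes f :: "nat \<Rightarrow> 'b::comm_monoid_add"
  assumes "0 < N" "\<And>k. 0 < k \<Longrightarrow> k < N \<Longrightarrow> f k = 0"
  shows "(\<Sum>k\<le>N. f k) = f 0 + f N"
proof -
  have "(\<Sum>k\<le>N. f k) = (\<Sum>k\<in>{0, N}. f k)"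
    by (rule sum.mono_neutral_right) (use assms in auto)
  then show ?thesis using assms by simp
qed

lemma cc_n: "cc p n n = -1"
  using sign_lemma[OF pn p_prim n2] by (simp add: cc_def)

lemma cc_mid: "0 < k \<Longrightarrow> k < n \<Longrightarrow> cc p n k = 0"
  using qb_vanish[OF pn p_prim] by (simp add: cc_def)

lemma S_n: "S i n a = y ^ n * G i a - G i a * y ^ n"
proof -
  have "S i n a = sc (cc p n 0) (y ^ (n - 0) * G (i + 0) a * y ^ 0) + sc (cc p n n) (y ^ (n - n) * G (i + n) a * y ^ n)"
    unfolding S_def by (rule sum_ends) (use n_pos cc_mid in auto)
  also have "G (i + n) a = G i a" by (simp add: G_def)
  finally show ?thesis by (simp add: cc_n)
qed

lemma F_n: "F i n a = y ^ n * G i a - G i a * y ^ n"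
proof -
  have "p ^ (i * n) = 1" by (simp add: power_mult[symmetric] mult.commute[of i] power_mult pn)
  then show ?thesis by (simp add: F_def S_n)
qed

definition formula where "formula \<longleftrightarrow> (\<forall>i<n. \<forall>j<n. \<forall>a. act i j a = F i j a)"
definition REC where "REC \<longleftrightarrow> (\<forall>i<n. \<forall>t. Suc t < n \<longrightarrow>
   (\<forall>a. act i (Suc t) a = sc (p ^ i) (y * act i t a - act (Suc i mod n) t a * y)))"

lemma formula_REC: "formula \<Longrightarrow> REC"
  unfolding REC_def
proof (intro allI impI)
  fix i t a assume f: formula and i: "i < n" and t: "Suc t < n"
  have "act i (Suc t) a = F i (Suc t) a" using f i t by (simp add: formula_def)
  also have "\<dots> = sc (p ^ i) (y * F i t a - F (Suc i) t a * y)" by (rule F_rec)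
  also have "F i t a = act i t a" using f i t by (simp add: formula_def)
  also have "F (Suc i) t a = F (Suc i mod n) t a" by (simp add: F_mod)
  also have "\<dots> = act (Suc i mod n) t a" using f t n_pos by (simp add: formula_def)
  finally show "act i (Suc t) a = sc (p ^ i) (y * act i t a - act (Suc i mod n) t a * y)" .
qed

lemma REC_formula: "REC \<Longrightarrow> formula"
proof -
  assume R: REC
  have "\<forall>i<n. \<forall>a. act i j a = F i j a" if "j < n" for j
    using that
  proof (induction j)
    case 0 then show ?case by (simp add: F0)
  next
    case (Suc t)
    show ?case
    proof (intro allI impI)
      fix i a assume i: "i < n"
      have "act i (Suc t) a = sc (p ^ i) (y * act i t a - act (Suc i mod n) t a * y)"
        using R i Suc.prems by (simp add: REC_def)
      also have "act i t a = F i t a" using Suc i by simp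
      also have "act (Suc i mod n) t a = F (Suc i mod n) t a" using Suc n_pos by simp
      also have "\<dots> = F (Suc i) t a" by (simp add: F_mod)
      also have "sc (p ^ i) (y * F i t a - F (Suc i) t a * y) = F i (Suc t) a" by (rule F_rec[symmetric])
      finally show "act i (Suc t) a = F i (Suc t) a" .
    qed
  qed
  then show ?thesis by (simp add: formula_def)
qed

lemma p_pow_cancel: "sc (p ^ k) u = sc (p ^ k) v \<Longrightarrow> u = v"
proof -
  assume "sc (p ^ k) u = sc (p ^ k) v"
  then have "sc (q ^ k) (sc (p ^ k) u) = sc (q ^ k) (sc (p ^ k) v)" by simp
  then show "u = v" by (simp add: qp_pow)
qed

lemma q_pow_cancel: "sc (q ^ k) u = sc (q ^ k) v \<Longrightarrow> u = v"
proof -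
  assume "sc (q ^ k) u = sc (q ^ k) v"
  then have "sc (p ^ k) (sc (q ^ k) u) = sc (p ^ k) (sc (q ^ k) v)" by simp
  then show "u = v" by (simp add: pq_pow)
qed

end


context taft begin

lemma one_lt_n: "1 < n" using n2 by simp

context
  assumes PA: "taft_partial_action sc n q act"
begin

lemma PA1: "act 0 0 a = a" using PA by (simp add: taft_partial_action_def)

lemma PA2: "i < n \<Longrightarrow> j < n \<Longrightarrow> act i j (a * b) =
        (\<Sum>m\<le>j. sc (qbinom q j m) (act ((i + m) mod n) (j - m) a * act i m b))"
  using PA by (simp add: taft_partial_action_def)

lemma PA3: "i < n \<Longrightarrow> j < n \<Longrightarrow> r < n \<Longrightarrow> s < n \<Longrightarrow> act i j (act r s a) =
        (\<Sum>m\<le>j. sc (qbinom q j m)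
            (act ((i + m) mod n) (j - m) 1 *
             (if m + s < n then sc (q ^ (m * r)) (act ((i + r) mod n) (m + s) a) else 0)))"
  using PA by (simp add: taft_partial_action_def)

lemma PA2_0: "i < n \<Longrightarrow> act i 0 (a * b) = act i 0 a * act i 0 b"
  using PA2[of i 0 a b] n_pos by simp

lemma PA2_1: "i < n \<Longrightarrow> act i 1 (a * b) = act i 1 a * act i 0 b + act (Suc i mod n) 0 a * act i 1 b"
  using PA2[of i 1 a b] one_lt_n by (simp add: add.commute)

lemma PA3_0: "i < n \<Longrightarrow> r < n \<Longrightarrow> s < n \<Longrightarrow> act i 0 (act r s a) = act i 0 1 * act ((i + r) mod n) s a"
  using PA3[of i 0 r s a] n_pos by simp

lemma PA3_1: "i < n \<Longrightarrow> r < n \<Longrightarrow> s < n \<Longrightarrow> act i 1 (act r s a) = act i 1 1 * act ((i + r) mod n) s a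
   + act (Suc i mod n) 0 1 * (if Suc s < n then sc (q ^ r) (act ((i + r) mod n) (Suc s) a) else 0)"
  using PA3[of i 1 r s a] one_lt_n by (simp add: add.commute)


lemma gpa: "group_partial_action n (\<lambda>i. act i 0)"
  unfolding group_partial_action_def using PA1 PA2_0 PA3_0 n_pos by auto

lemma e_all: "act 1 0 1 = 1 \<Longrightarrow> k < n \<Longrightarrow> act k 0 1 = 1"
proof (induction k)
  case 0 then show ?case by (simp add: PA1)
next
  case (Suc k)
  have "act 1 0 (act k 0 1) = act 1 0 1 * act ((1 + k) mod n) 0 1"
    using PA3_0[of 1 k 0 1] Suc.prems one_lt_n by simp
  then show ?case using Suc by simp
qed

lemma y0: "act 1 0 1 = 1 \<Longrightarrow> y = 0"
proof -
  assume e1: "act 1 0 1 = 1"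
  have "act 0 1 (1 * 1) = act 0 1 1 * act 0 0 1 + act (Suc 0 mod n) 0 1 * act 0 1 1"
    using PA2_1[of 0 1 1] n_pos by simp
  then have "y = y + y" using e1 one_lt_n by (simp add: y_def PA1)
  then show "y = 0" by simp
qed

lemma xpow0: "act 1 0 1 = 1 \<Longrightarrow> 0 < j \<Longrightarrow> j < n \<Longrightarrow> act 0 j 1 = 0"
proof (induction j)
  case 0 then show ?case by simp
next
  case (Suc j)
  show ?case
  proof (cases j)
    case 0 then show ?thesis using y0 Suc.prems by (simp add: y_def)
  next
    case (Suc j')
    have jn: "j < n" using Suc.prems by simp
    have "act 0 1 (act 0 j 1) = act 0 1 1 * act 0 j 1 + act (Suc 0 mod n) 0 1 * (if Suc j < n then sc (q ^ 0) (act 0 (Suc j) 1) else 0)"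
      using PA3_1[of 0 0 j 1] jn n_pos by simp
    moreover have "act 0 j 1 = 0" using Suc.IH Suc.prems Suc by simp
    ultimately show ?thesis using Suc.prems one_lt_n act_zero[of 0 1] by simp
  qed
qed

lemma global_case: "act 1 0 1 = 1 \<Longrightarrow> taft_global_action sc n q act"
proof -
  assume e1: "act 1 0 1 = 1"
  have "act i j 1 = (if j = 0 then 1 else 0)" if "i < n" "j < n" for i j
  proof (cases "j = 0")
    case True then show ?thesis using e_all e1 that by simp
  next
    case False
    have "act i 0 (act 0 j 1) = act i 0 1 * act ((i + 0) mod n) j 1"
      using PA3_0[of i 0 j 1] that n_pos by simp
    then show ?thesis using xpow0[OF e1, of j] False that e_all[OF e1] act_zero[of i 0] n_pos by simp
  qed
  then show ?thesis using PA by (simp add: taft_global_action_def)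
qed

context
  assumes e1: "act 1 0 1 = 0"
begin

lemma g1: "act 1 0 a = 0"
  using PA2_0[of 1 a 1] one_lt_n e1 by simp

lemma en1: "act (n - 1) 0 1 = 0"
proof -
  have "act (n - 1) 0 (act 1 0 1) = act (n - 1) 0 1 * act ((n - 1 + 1) mod n) 0 1"
    using PA3_0[of "n - 1" 1 0 1] one_lt_n by simp
  then show ?thesis using e1 act_zero[of "n - 1" 0] n_pos by (simp add: PA1)
qed

lemma xa: "act 0 1 a = y * a"
  using PA2_1[of 0 1 a] e1 n_pos one_lt_n by (simp add: y_def PA1)

lemma zz: "act (n - 1) 1 1 = - sc q y"
proof -
  have "act (n - 1) 1 (act 1 0 1) = act (n - 1) 1 1 * act ((n - 1 + 1) mod n) 0 1
   + act (Suc (n - 1) mod n) 0 1 * (if Suc 0 < n then sc (q ^ 1) (act ((n - 1 + 1) mod n) (Suc 0) 1) else 0)"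
    using PA3_1[of "n - 1" 1 0 1] one_lt_n by simp
  then have "0 = act (n - 1) 1 1 + sc q y"
    using e1 act_zero[of "n - 1" 1] n_pos one_lt_n by (simp add: PA1 y_def)
  then show ?thesis by (simp add: eq_neg_iff_add_eq_0)
qed

lemma F5: "act (n - 1) 1 b = - sc q (b * y)"
proof -
  have "act (n - 1) 1 (b * 1) = act (n - 1) 1 b * act (n - 1) 0 1 + act (Suc (n - 1) mod n) 0 b * act (n - 1) 1 1"
    using PA2_1[of "n - 1" b 1] n_pos by simp
  then show ?thesis using en1 zz n_pos by (simp add: PA1)
qed

lemmas F5s = F5[simplified] and zzs = zz[simplified]

lemma idx: "i < n \<Longrightarrow> (n - 1 + Suc i mod n) mod n = i"
proof (cases "Suc i < n")
  case True
  then have "n - 1 + Suc i mod n = i + n" using n_pos by simp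
  then show ?thesis using True by simp
next
  case False
  assume "i < n"
  then have "Suc i = n" using False by simp
  then show ?thesis by simp
qed

lemma REC_fwd: REC
  unfolding REC_def
proof (intro allI impI)
  fix i t a assume i: "i < n" and t: "Suc t < n"
  define r where "r = Suc i mod n"
  have r: "r < n" using n_pos by (simp add: r_def)
  have "act (n - 1) 1 (act r t a) = act (n - 1) 1 1 * act ((n - 1 + r) mod n) t a
   + act (Suc (n - 1) mod n) 0 1 * (if Suc t < n then sc (q ^ r) (act ((n - 1 + r) mod n) (Suc t) a) else 0)"
    using PA3_1[of "n - 1" r t a] r t n_pos by simp
  also have "(n - 1 + r) mod n = i" using idx i by (simp add: r_def)
  finally have "- sc q (act r t a * y) = - sc q (y * act i t a) + sc (q ^ r) (act i (Suc t) a)"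
    using t n_pos by (simp add: F5s zzs PA1)
  then have "sc (q ^ r) (act i (Suc t) a) = sc q (y * act i t a - act r t a * y)"
    by (simp add: M.scale_right_diff_distrib algebra_simps)
  then have "sc (p ^ r) (sc (q ^ r) (act i (Suc t) a)) = sc (p ^ r) (sc q (y * act i t a - act r t a * y))"
    by simp
  moreover have "p ^ r * q = p ^ i"
  proof -
    have "p ^ r = p ^ Suc i" by (simp add: r_def p_mod)
    then show ?thesis by (simp add: mult.assoc pq qp)
  qed
  ultimately show "act i (Suc t) a = sc (p ^ i) (y * act i t a - act (Suc i mod n) t a * y)"
    by (simp add: pq_pow r_def mult.commute[of "p ^ i"])
qed

lemma formula_fwd: formula using REC_fwd REC_formula by blast

lemma iii_fwd: "i < n \<Longrightarrow> act i 0 y = sc (p ^ i) (act i 0 1 * y)"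
proof (cases "i = 0")
  case True then show ?thesis by (simp add: PA1)
next
  case False
  assume i: "i < n"
  have ni: "n - i < n" "0 < n - i" using False i by auto
  have "act i 0 (act (n - i) 1 1) = act i 0 1 * act ((i + (n - i)) mod n) 1 1"
    using PA3_0[of i "n - i" 1 1] i ni one_lt_n by simp
  then have A: "act i 0 (act (n - i) 1 1) = act i 0 1 * y" using i by (simp add: y_def)
  have R: "act (n - i) 1 1 = sc (p ^ (n - i)) (y * act (n - i) 0 1 - act (Suc (n - i) mod n) 0 1 * y)"
    using REC_fwd ni one_lt_n by (simp add: REC_def)
  have B1: "act i 0 (act (n - i) 0 1) = act i 0 1"
    using PA3_0[of i "n - i" 0 1] i ni by (simp add: PA1)
  have "(i + Suc (n - i) mod n) mod n = 1"
  proof -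
    have "(i + Suc (n - i) mod n) mod n = (i + Suc (n - i)) mod n" by (simp add: mod_add_right_eq)
    also have "i + Suc (n - i) = 1 + n" using i by simp
    finally show ?thesis using one_lt_n by (simp add: mod_Suc)
  qed
  then have B2: "act i 0 (act (Suc (n - i) mod n) 0 1) = 0"
    using PA3_0[of i "Suc (n - i) mod n" 0 1] i n_pos e1 by simp
  have C: "act i 0 y * act i 0 1 = act i 0 y" using PA2_0[of i y 1] i by simp
  have "act i 0 1 * y = sc (p ^ (n - i)) (act i 0 y)"
    using A R B1 B2 C i n_pos by (simp add: act_sc act_diff PA2_0)
  then have "sc (p ^ i) (act i 0 1 * y) = sc (p ^ i * p ^ (n - i)) (act i 0 y)" by simp
  also have "p ^ i * p ^ (n - i) = 1" using i pn by (simp add: power_add[symmetric])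
  finally show ?thesis by simp
qed

lemma ii_fwd: "y ^ n * b = b * y ^ n"
proof -
  have top: "act 1 (n - 1) b * y = y * act 0 (n - 1) b"
  proof -
    have "act (n - 1) 1 (act 1 (n - 1) b) = act (n - 1) 1 1 * act ((n - 1 + 1) mod n) (n - 1) b
     + act (Suc (n - 1) mod n) 0 1 * (if Suc (n - 1) < n then sc (q ^ 1) (act ((n - 1 + 1) mod n) (Suc (n - 1)) b) else 0)"
      using PA3_1[of "n - 1" 1 "n - 1" b] one_lt_n by simp
    then have "- sc q (act 1 (n - 1) b * y) = - sc q (y * act 0 (n - 1) b)"
      using n_pos by (simp add: F5s zzs)
    then have "sc q (act 1 (n - 1) b * y) = sc q (y * act 0 (n - 1) b)" by simp
    then show ?thesis using q_pow_cancel[of 1] by simp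
  qed
  have "F 0 n b = F 0 (Suc (n - 1)) b" using n_pos by simp
  also have "\<dots> = sc (p ^ 0) (y * F 0 (n - 1) b - F (Suc 0) (n - 1) b * y)" by (rule F_rec)
  also have "F 0 (n - 1) b = act 0 (n - 1) b" using formula_fwd n_pos by (simp add: formula_def)
  also have "F (Suc 0) (n - 1) b = act 1 (n - 1) b" using formula_fwd n_pos one_lt_n by (simp add: formula_def)
  finally have "F 0 n b = 0" using top by simp
  moreover have "G 0 b = b" by (simp add: G_def PA1)
  ultimately show ?thesis using F_n[of 0 b] by simp
qed

end

end
end


context taft begin

definition E where "E i t a = (if t < n then act (i mod n) t a else 0)"

lemma E_mod: "E (i mod n) t a = E i t a" by (simp add: E_def)

lemma E_add: "E i t (a + b) = E i t a + E i t b"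
  using n_pos by (simp add: E_def act_add)
lemma E_sc: "E i t (sc c a) = sc c (E i t a)"
  using n_pos by (simp add: E_def act_sc)
lemma E_zero: "E i t 0 = 0"
  using n_pos by (simp add: E_def act_zero)
lemma E_diff: "E i t (a - b) = E i t a - E i t b"
  using n_pos by (simp add: E_def act_diff)

lemma twist:
  assumes "y * W - W' * y = sc (q ^ (i + m)) X" "y * Z - Z' * y = sc (q ^ i) Y"
  shows "sc (p ^ i) (y * W * Z - W' * Z' * y) = sc (q ^ m) (X * Z) + W' * Y"
proof -
  have "y * W * Z - W' * Z' * y = (y * W - W' * y) * Z + W' * (y * Z - Z' * y)"
    by (simp add: algebra_simps)
  also have "\<dots> = sc (q ^ (i + m)) (X * Z) + sc (q ^ i) (W' * Y)" using assms by simp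
  finally have "sc (p ^ i) (y * W * Z - W' * Z' * y) = sc (p ^ i * q ^ (i + m)) (X * Z) + sc (p ^ i * q ^ i) (W' * Y)"
    by (simp add: M.scale_right_distrib)
  also have "p ^ i * q ^ (i + m) = q ^ m" by (simp add: power_add mult.assoc[symmetric] pq_pow)
  also have "p ^ i * q ^ i = 1" by (rule pq_pow)
  finally show ?thesis by simp
qed

lemma pascal_sum:
  "(\<Sum>m\<le>j. sc (qbinom q j m) (sc (q ^ m) (X m))) + (\<Sum>m\<le>j. sc (qbinom q j m) (X (Suc m)))
   = (\<Sum>m\<le>Suc j. sc (qbinom q (Suc j) m) (X m))"
proof -
  have "(\<Sum>m\<le>Suc j. sc (qbinom q (Suc j) m) (X m))
     = (\<Sum>m\<le>Suc j. sc (q ^ m * qbinom q j m) (X m)) + (\<Sum>m\<le>Suc j. sc (if m = 0 then 0 else qbinom q j (m - 1)) (X m))"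
    by (simp add: qb_Suc M.scale_left_distrib sum.distrib add.commute)
  also have "(\<Sum>m\<le>Suc j. sc (q ^ m * qbinom q j m) (X m)) = (\<Sum>m\<le>j. sc (qbinom q j m) (sc (q ^ m) (X m)))"
    by (simp add: qb_zero mult.commute)
  also have "(\<Sum>m\<le>Suc j. sc (if m = 0 then 0 else qbinom q j (m - 1)) (X m)) = (\<Sum>m\<le>j. sc (qbinom q j m) (X (Suc m)))"
    by (simp only: sum.atMost_Suc_shift) simp
  finally show ?thesis by simp
qed

context
  assumes GP: "group_partial_action n (\<lambda>i. act i 0)"
    and FO: formula
    and II: "\<forall>b. y ^ n * b = b * y ^ n"
    and III: "\<forall>i<n. act i 0 y = sc (p ^ i) (act i 0 1 * y)"
begin

lemma GP1: "act 0 0 a = a" using GP by (simp add: group_partial_action_def)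
lemma GP2: "i < n \<Longrightarrow> act i 0 (a * b) = act i 0 a * act i 0 b"
  using GP by (simp add: group_partial_action_def)
lemma GP3: "i < n \<Longrightarrow> r < n \<Longrightarrow> act i 0 (act r 0 a) = act i 0 1 * act ((i + r) mod n) 0 a"
  using GP by (simp add: group_partial_action_def)

lemma top: "i < n \<Longrightarrow> y * act i (n - 1) a = act (Suc i mod n) (n - 1) a * y"
proof -
  assume i: "i < n"
  have "F i n a = 0" using II by (simp add: F_n)
  moreover have "F i n a = F i (Suc (n - 1)) a" using n_pos by simp
  moreover have "\<dots> = sc (p ^ i) (y * F i (n - 1) a - F (Suc i) (n - 1) a * y)" by (rule F_rec)
  moreover have "F i (n - 1) a = act i (n - 1) a" using FO i n_pos by (simp add: formula_def)
  moreover have "F (Suc i) (n - 1) a = act (Suc i mod n) (n - 1) a"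
    using FO n_pos F_mod[of "Suc i" "n - 1" a] by (simp add: formula_def)
  ultimately have "sc (p ^ i) (y * act i (n - 1) a - act (Suc i mod n) (n - 1) a * y) = sc (p ^ i) 0"
    by simp
  then have "y * act i (n - 1) a - act (Suc i mod n) (n - 1) a * y = 0" by (rule p_pow_cancel)
  then show ?thesis by simp
qed

lemma E_rec: "E i (Suc t) a = sc (p ^ i) (y * E i t a - E (Suc i) t a * y)"
proof (cases "Suc t < n")
  case True
  have "act (i mod n) (Suc t) a = sc (p ^ (i mod n)) (y * act (i mod n) t a - act (Suc (i mod n) mod n) t a * y)"
    using formula_REC[OF FO] True n_pos by (simp add: REC_def)
  then show ?thesis using True by (simp add: E_def p_mod mod_Suc_eq)
next
  case False
  show ?thesis
  proof (cases "Suc t = n")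
    case True
    then have "t = n - 1" by simp
    then show ?thesis using True top[of "i mod n" a] n_pos by (simp add: E_def mod_Suc_eq)
  next
    case False
    then show ?thesis using \<open>\<not> Suc t < n\<close> by (simp add: E_def)
  qed
qed

lemma E_rec': "y * E k t a - E (Suc k) t a * y = sc (q ^ k) (E k (Suc t) a)"
  by (simp add: E_rec qp_pow)

lemma E0mult: "E i 0 (a * b) = E i 0 a * E i 0 b"
  using n_pos by (simp add: E_def GP2)

lemma Ey: "E i 0 y = sc (p ^ i) (E i 0 1 * y)"
  using n_pos III by (simp add: E_def p_mod)


lemma PA2_E: "E i j (a * b) = (\<Sum>m\<le>j. sc (qbinom q j m) (E (i + m) (j - m) a * E i m b))"
proof (induction j arbitrary: i)
  case 0 then show ?case by (simp add: E0mult)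
next
  case (Suc j)
  define X where "X m = E (i + m) (Suc j - m) a * E i m b" for m
  have "E i (Suc j) (a * b) = sc (p ^ i) (y * E i j (a * b) - E (Suc i) j (a * b) * y)" by (rule E_rec)
  also have "\<dots> = sc (p ^ i) (y * (\<Sum>m\<le>j. sc (qbinom q j m) (E (i + m) (j - m) a * E i m b))
        - (\<Sum>m\<le>j. sc (qbinom q j m) (E (Suc (i + m)) (j - m) a * E (Suc i) m b)) * y)"
    using Suc.IH[of i] Suc.IH[of "Suc i"] by simp
  also have "\<dots> = (\<Sum>m\<le>j. sc (qbinom q j m) (sc (p ^ i) (y * E (i + m) (j - m) a * E i m b
        - E (Suc (i + m)) (j - m) a * E (Suc i) m b * y)))"
    by (simp add: sum_distrib_left sum_distrib_right M.scale_sum_right sum_subtractf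
        M.scale_right_diff_distrib mult.assoc mult.commute[of "p ^ i"])
  also have "\<dots> = (\<Sum>m\<le>j. sc (qbinom q j m) (sc (q ^ m) (X m) + X (Suc m)))"
  proof (rule sum.cong)
    fix m assume m: "m \<in> {..j}"
    have "sc (p ^ i) (y * E (i + m) (j - m) a * E i m b - E (Suc (i + m)) (j - m) a * E (Suc i) m b * y)
        = sc (q ^ m) (E (i + m) (Suc (j - m)) a * E i m b) + E (Suc (i + m)) (j - m) a * E i (Suc m) b"
      by (rule twist) (rule E_rec')+
    also have "Suc (j - m) = Suc j - m" using m by simp
    also have "E (Suc (i + m)) (j - m) a * E i (Suc m) b = X (Suc m)" by (simp add: X_def)
    finally show "sc (qbinom q j m) (sc (p ^ i) (y * E (i + m) (j - m) a * E i m b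
        - E (Suc (i + m)) (j - m) a * E (Suc i) m b * y)) = sc (qbinom q j m) (sc (q ^ m) (X m) + X (Suc m))"
      by (simp add: X_def)
  qed simp
  also have "\<dots> = (\<Sum>m\<le>j. sc (qbinom q j m) (sc (q ^ m) (X m))) + (\<Sum>m\<le>j. sc (qbinom q j m) (X (Suc m)))"
    by (simp only: M.scale_right_distrib sum.distrib)
  also have "\<dots> = (\<Sum>m\<le>Suc j. sc (qbinom q (Suc j) m) (X m))"
    by (rule pascal_sum)
  finally show ?case by (simp add: X_def)
qed


lemma E0_one: "E i 0 d * E i 0 1 = E i 0 d"
  using E0mult[of i d 1] by simp

lemma eye: "E i 0 1 * y * E i 0 1 = E i 0 1 * y"
proof -
  have "sc (p ^ i) (E i 0 1 * y) * E i 0 1 = sc (p ^ i) (E i 0 1 * y)"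
    using E0_one[of i y] Ey[of i] by simp
  then have "sc (p ^ i) (E i 0 1 * y * E i 0 1) = sc (p ^ i) (E i 0 1 * y)" by simp
  then show ?thesis by (rule p_pow_cancel)
qed

lemma PA3_E0: "E i 0 (E r s a) = E i 0 1 * E (i + r) s a"
proof (induction s arbitrary: r)
  case 0
  have "act (i mod n) 0 (act (r mod n) 0 a) = act (i mod n) 0 1 * act ((i mod n + r mod n) mod n) 0 a"
    using GP3 n_pos by simp
  then show ?case using n_pos by (simp add: E_def mod_add_eq)
next
  case (Suc s)
  define e where "e = E i 0 1"
  have "E i 0 (E r (Suc s) a) = sc (p ^ r) (E i 0 y * E i 0 (E r s a) - E i 0 (E (Suc r) s a) * E i 0 y)"
    by (simp add: E_rec E_sc E_diff E0mult)
  also have "E i 0 y * E i 0 (E r s a) = sc (p ^ i) (e * y * (e * E (i + r) s a))"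
    using Ey[of i] Suc.IH[of r] by (simp add: e_def)
  also have "\<dots> = sc (p ^ i) (e * y * E (i + r) s a)"
    using eye[of i] by (simp add: e_def mult.assoc[symmetric])
  also have "E i 0 (E (Suc r) s a) * E i 0 y = sc (p ^ i) (E i 0 (E (Suc r) s a) * e * y)"
    using Ey[of i] by (simp add: e_def mult.assoc)
  also have "E i 0 (E (Suc r) s a) * e = e * E (Suc (i + r)) s a"
    using E0_one[of i "E (Suc r) s a"] Suc.IH[of "Suc r"] by (simp add: e_def)
  finally have "E i 0 (E r (Suc s) a) = sc (p ^ r * p ^ i) (e * (y * E (i + r) s a - E (Suc (i + r)) s a * y))"
    by (simp add: mult.assoc algebra_simps M.scale_right_diff_distrib)
  also have "\<dots> = e * E (i + r) (Suc s) a"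
    by (simp add: E_rec power_add mult.commute)
  finally show ?case by (simp add: e_def)
qed

lemma PA3_E: "E i j (E r s a) = (\<Sum>m\<le>j. sc (qbinom q j m) (E (i + m) (j - m) 1 * sc (q ^ (m * r)) (E (i + r) (m + s) a)))"
proof (induction j arbitrary: i)
  case 0 then show ?case by (simp add: PA3_E0)
next
  case (Suc j)
  define X where "X m = E (i + m) (Suc j - m) 1 * sc (q ^ (m * r)) (E (i + r) (m + s) a)" for m
  have "E i (Suc j) (E r s a) = sc (p ^ i) (y * E i j (E r s a) - E (Suc i) j (E r s a) * y)" by (rule E_rec)
  also have "\<dots> = sc (p ^ i) (y * (\<Sum>m\<le>j. sc (qbinom q j m) (E (i + m) (j - m) 1 * sc (q ^ (m * r)) (E (i + r) (m + s) a)))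
        - (\<Sum>m\<le>j. sc (qbinom q j m) (E (Suc (i + m)) (j - m) 1 * sc (q ^ (m * r)) (E (Suc (i + r)) (m + s) a))) * y)"
    using Suc.IH[of i] Suc.IH[of "Suc i"] by simp
  also have "\<dots> = (\<Sum>m\<le>j. sc (qbinom q j m) (sc (p ^ i) (y * E (i + m) (j - m) 1 * sc (q ^ (m * r)) (E (i + r) (m + s) a)
        - E (Suc (i + m)) (j - m) 1 * sc (q ^ (m * r)) (E (Suc (i + r)) (m + s) a) * y)))"
    by (simp add: sum_distrib_left sum_distrib_right M.scale_sum_right sum_subtractf
        M.scale_right_diff_distrib mult.assoc mult.commute[of "p ^ i"])
  also have "\<dots> = (\<Sum>m\<le>j. sc (qbinom q j m) (sc (q ^ m) (X m) + X (Suc m)))"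
  proof (rule sum.cong)
    fix m assume m: "m \<in> {..j}"
    have h2: "y * sc (q ^ (m * r)) (E (i + r) (m + s) a) - sc (q ^ (m * r)) (E (Suc (i + r)) (m + s) a) * y
        = sc (q ^ i) (sc (q ^ (Suc m * r)) (E (i + r) (Suc m + s) a))"
    proof -
      have "y * sc (q ^ (m * r)) (E (i + r) (m + s) a) - sc (q ^ (m * r)) (E (Suc (i + r)) (m + s) a) * y
          = sc (q ^ (m * r)) (y * E (i + r) (m + s) a - E (Suc (i + r)) (m + s) a * y)"
        by (simp add: M.scale_right_diff_distrib)
      also have "\<dots> = sc (q ^ (m * r) * q ^ (i + r)) (E (i + r) (Suc (m + s)) a)" by (simp add: E_rec')
      also have "q ^ (m * r) * q ^ (i + r) = q ^ i * q ^ (Suc m * r)"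
        by (simp add: power_add[symmetric] algebra_simps)
      finally show ?thesis by simp
    qed
    have "sc (p ^ i) (y * E (i + m) (j - m) 1 * sc (q ^ (m * r)) (E (i + r) (m + s) a)
        - E (Suc (i + m)) (j - m) 1 * sc (q ^ (m * r)) (E (Suc (i + r)) (m + s) a) * y)
        = sc (q ^ m) (E (i + m) (Suc (j - m)) 1 * sc (q ^ (m * r)) (E (i + r) (m + s) a))
          + E (Suc (i + m)) (j - m) 1 * sc (q ^ (Suc m * r)) (E (i + r) (Suc m + s) a)"
      by (rule twist) (rule E_rec', rule h2)
    also have "Suc (j - m) = Suc j - m" using m by simp
    finally show "sc (qbinom q j m) (sc (p ^ i) (y * E (i + m) (j - m) 1 * sc (q ^ (m * r)) (E (i + r) (m + s) a)
        - E (Suc (i + m)) (j - m) 1 * sc (q ^ (m * r)) (E (Suc (i + r)) (m + s) a) * y))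
        = sc (qbinom q j m) (sc (q ^ m) (X m) + X (Suc m))"
      by (simp add: X_def)
  qed simp
  also have "\<dots> = (\<Sum>m\<le>j. sc (qbinom q j m) (sc (q ^ m) (X m))) + (\<Sum>m\<le>j. sc (qbinom q j m) (X (Suc m)))"
    by (simp only: M.scale_right_distrib sum.distrib)
  also have "\<dots> = (\<Sum>m\<le>Suc j. sc (qbinom q (Suc j) m) (X m))"
    by (rule pascal_sum)
  finally show ?case by (simp add: X_def)
qed


lemma PA_back: "taft_partial_action sc n q act"
  unfolding taft_partial_action_def
proof (intro conjI allI impI)
  fix a show "act 0 0 a = a" by (rule GP1)
next
  fix i j a b assume i: "i < n" and j: "j < n"
  have "act i j (a * b) = E i j (a * b)" using i j by (simp add: E_def)
  also have "\<dots> = (\<Sum>m\<le>j. sc (qbinom q j m) (E (i + m) (j - m) a * E i m b))" by (rule PA2_E)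
  also have "\<dots> = (\<Sum>m\<le>j. sc (qbinom q j m) (act ((i + m) mod n) (j - m) a * act i m b))"
    by (rule sum.cong) (use i j in \<open>auto simp: E_def\<close>)
  finally show "act i j (a * b) = (\<Sum>m\<le>j. sc (qbinom q j m) (act ((i + m) mod n) (j - m) a * act i m b))" .
next
  fix i j r s a assume i: "i < n" and j: "j < n" and r: "r < n" and s: "s < n"
  have "act i j (act r s a) = E i j (E r s a)" using i j r s by (simp add: E_def)
  also have "\<dots> = (\<Sum>m\<le>j. sc (qbinom q j m) (E (i + m) (j - m) 1 * sc (q ^ (m * r)) (E (i + r) (m + s) a)))"
    by (rule PA3_E)
  also have "\<dots> = (\<Sum>m\<le>j. sc (qbinom q j m)
            (act ((i + m) mod n) (j - m) 1 *
             (if m + s < n then sc (q ^ (m * r)) (act ((i + r) mod n) (m + s) a) else 0)))"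
    by (rule sum.cong) (use i j in \<open>auto simp: E_def\<close>)
  finally show "act i j (act r s a) = (\<Sum>m\<le>j. sc (qbinom q j m)
            (act ((i + m) mod n) (j - m) 1 *
             (if m + s < n then sc (q ^ (m * r)) (act ((i + r) mod n) (m + s) a) else 0)))" .
qed

end


theorem main:
  assumes "act 1 0 1 = 0 \<or> act 1 0 1 = 1"
  shows "taft_partial_action sc n q act \<longleftrightarrow>
    (taft_global_action sc n q act \<or>
     (group_partial_action n (\<lambda>i. act i 0) \<and> act 1 0 1 = 0 \<and> formula \<and>
      (\<forall>b. y ^ n * b = b * y ^ n) \<and>
      (\<forall>i<n. act i 0 y = sc (p ^ i) (act i 0 1 * y))))"
proof
  assume PA: "taft_partial_action sc n q act"
  show "taft_global_action sc n q act \<or>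
     (group_partial_action n (\<lambda>i. act i 0) \<and> act 1 0 1 = 0 \<and> formula \<and>
      (\<forall>b. y ^ n * b = b * y ^ n) \<and>
      (\<forall>i<n. act i 0 y = sc (p ^ i) (act i 0 1 * y)))"
  proof (cases "act 1 0 1 = 1")
    case True
    then show ?thesis using global_case[OF PA] by blast
  next
    case False
    then have e1: "act 1 0 1 = 0" using assms by blast
    show ?thesis using gpa[OF PA] formula_fwd[OF PA e1] ii_fwd[OF PA e1] iii_fwd[OF PA e1] e1 by blast
  qed
next
  assume "taft_global_action sc n q act \<or>
     (group_partial_action n (\<lambda>i. act i 0) \<and> act 1 0 1 = 0 \<and> formula \<and>
      (\<forall>b. y ^ n * b = b * y ^ n) \<and>
      (\<forall>i<n. act i 0 y = sc (p ^ i) (act i 0 1 * y)))"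
  then show "taft_partial_action sc n q act"
  proof
    assume "taft_global_action sc n q act"
    then show ?thesis by (simp add: taft_global_action_def)
  next
    assume "group_partial_action n (\<lambda>i. act i 0) \<and> act 1 0 1 = 0 \<and> formula \<and>
      (\<forall>b. y ^ n * b = b * y ^ n) \<and>
      (\<forall>i<n. act i 0 y = sc (p ^ i) (act i 0 1 * y))"
    then show ?thesis using PA_back by blast
  qed
qed

end

theorem theorem3p9:
  fixes sc :: "'k::field \<Rightarrow> 'a::ring_1 \<Rightarrow> 'a"
    and n :: nat and q :: 'k
    and act :: "nat \<Rightarrow> nat \<Rightarrow> 'a \<Rightarrow> 'a"
  assumes "algebra_over sc"
    and "n \<ge> 2"
    and "primitive_root n q"
    and "taft_linear_map sc n act"
    and "act 1 0 1 = 0 \<or> act 1 0 1 = 1"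
  shows "taft_partial_action sc n q act \<longleftrightarrow>
    (taft_global_action sc n q act \<or>
     (group_partial_action n (\<lambda>i. act i 0) \<and> act 1 0 1 = 0 \<and>
      (\<forall>i<n. \<forall>j<n. \<forall>a. act i j a =
         sc (inverse q ^ (i * j))
           (\<Sum>k\<le>j. sc ((-1) ^ k * inverse q ^ (k * (k - 1) div 2) * qbinom (inverse q) j k)
              (act 0 1 1 ^ (j - k) * act ((i + k) mod n) 0 a * act 0 1 1 ^ k))) \<and>
      (\<forall>b. act 0 1 1 ^ n * b = b * act 0 1 1 ^ n) \<and>
      (\<forall>i<n. act i 0 (act 0 1 1) = sc (inverse q ^ i) (act i 0 1 * act 0 1 1))))"
proof -
  interpret T: taft sc n q act using assms(1-4) by (unfold_locales) auto
  show ?thesis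
    using T.main[OF assms(5)]
    unfolding T.formula_def T.F_def T.S_def cc_def T.G_def T.p_def T.y_def .
qed



end
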